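(* Let $X$ be a finite set and let $c$ be a choice correspondence on $X$ satisfying: (Condition 1) for all $x,y\in X$ and menus $A\subset B$, if $x,y\in A$, $x\in c(A)$ and $y\in c(B)$, then $x\in c(B)$; and (Condition 3) for every menu $A$ with at least two elements there exists $x\in A$ with $x\notin c(A)$. Then $c$ satisfies No Binary Cycles: for all $x,y,z\in X$, if $x\in c(\{x,y\})$ and $y\in c(\{y,z\})$, then $x\in c(\{x,z\})$.
   Context: A menu is a nonempty subset of $X$. A choice correspondence is a map $c$ assigning to each menu $A$ a nonempty subset $c(A)\subseteq A$. *)

theory Defs
  imports Main
begin

definition menu :: "'a set \<Rightarrow> 'a set \<Rightarrow> bool" where
  "menu X A \<longleftrightarrow> A \<noteq> {} \<and> A \<subseteq> X"

definition choice_correspondence :: "'a set \<Rightarrow> ('a set \<Rightarrow> 'a set) \<Rightarrow> bool" where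
  "choice_correspondence X c \<longleftrightarrow> (\<forall>A. menu X A \<longrightarrow> c A \<noteq> {} \<and> c A \<subseteq> A)"

end

theory Submission
  imports Defs
begin

theorem lemma4:
  fixes X :: "'a set" and c :: "'a set \<Rightarrow> 'a set"
  assumes fin: "finite X"
    and cc: "choice_correspondence X c"
    and cond1: "\<And>x y A B. \<lbrakk> x \<in> X; y \<in> X; menu X A; menu X B; A \<subset> B;
                  x \<in> A; y \<in> A; x \<in> c A; y \<in> c B \<rbrakk> \<Longrightarrow> x \<in> c B"
    and cond3: "\<And>A. \<lbrakk> menu X A; card A \<ge> 2 \<rbrakk> \<Longrightarrow> \<exists>x\<in>A. x \<notin> c A"
  shows "\<forall>x\<in>X. \<forall>y\<in>X. \<forall>z\<in>X.
           x \<in> c {x, y} \<and> y \<in> c {y, z} \<longrightarrow> x \<in> c {x, z}"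
proof (intro ballI impI)
  fix x y z assume xX: "x \<in> X" and yX: "y \<in> X" and zX: "z \<in> X"
    and h: "x \<in> c {x, y} \<and> y \<in> c {y, z}"
  have ccA: "\<And>A. menu X A \<Longrightarrow> c A \<noteq> {} \<and> c A \<subseteq> A" using cc unfolding choice_correspondence_def by blast
  show "x \<in> c {x, z}"
  proof (rule ccontr)
    assume nx: "x \<notin> c {x, z}"
    have mxz: "menu X {x,z}" using xX zX unfolding menu_def by auto
    have zc: "z \<in> c {x, z}" using ccA[OF mxz] nx by blast
    have xz: "x \<noteq> z" using zc nx by blast
    have xy: "x \<noteq> y" using h nx by auto
    have yz: "y \<noteq> z" using h nx by auto
    define T where "T = {x,y,z}"
    have mT: "menu X T" using xX yX zX unfolding menu_def T_def by auto
    have mxy: "menu X {x,y}" using xX yX unfolding menu_def by auto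
    have myz: "menu X {y,z}" using yX zX unfolding menu_def by auto
    have s1: "{x,y} \<subset> T" using xz yz unfolding T_def by auto
    have s2: "{y,z} \<subset> T" using xy xz unfolding T_def by auto
    have s3: "{x,z} \<subset> T" using xy yz unfolding T_def by auto
    have a1: "y \<in> c T \<Longrightarrow> x \<in> c T"
      using cond1[OF xX yX mxy mT s1] h by auto
    have a2: "z \<in> c T \<Longrightarrow> y \<in> c T"
      using cond1[OF yX zX myz mT s2] h by auto
    have a3: "x \<in> c T \<Longrightarrow> z \<in> c T"
      using cond1[OF zX xX mxz mT s3] zc by auto
    obtain w where w: "w \<in> c T" using ccA[OF mT] by blast
    have "w \<in> T" using w ccA[OF mT] by blast
    then have all: "T \<subseteq> c T" using w a1 a2 a3 unfolding T_def by blast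
    have "card T = 3" using xy xz yz unfolding T_def by auto
    then obtain v where "v \<in> T" "v \<notin> c T" using cond3[OF mT] by auto
    then show False using all by blast
  qed
qed

end
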